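(* Let $\varphi:\mathbb{R}^n\times\mathbb{R}^m\to\mathbb{R}\cup\{+\infty\}$ be a closed proper convex function and $L(x,\lambda)=\inf_u\{\varphi(x,u)-\langle\lambda,u\rangle\}$. Let $(x^*,\lambda^* )$ be a saddle point of $L$, i.e. $L(x^*,\lambda)\leqslant L(x^*,\lambda^* )\leqslant L(x,\lambda^* )$ for all $x,\lambda$. Let $H\in\mathbb{R}^{m\times m}$ be symmetric positive definite and let $(A_k),(a_k),(b_k),(c_k)$, $k\geqslant0$, be real sequences with $a_k>0$, $b_k\geqslant0$, $c_k>0$ and $$A_{k+1}-A_k=a_k,\quad A_k=a_kb_k,\quad A_0=b_0=0,\quad c_k\geqslant a_k.$$ Let $\lambda_0\in\mathbb{R}^m$, $z_0=\lambda_0$, and for $k\geqslant0$ $$\tilde\lambda_{k+1}=\frac{1}{b_k+1}z_k+\frac{b_k}{b_k+1}\lambda_k,$$ $$(x_{k+1},u_{k+1})\in\arg\min_{x,u}\Big\{\varphi(x,u)-\langle\tilde\lambda_{k+1},u\rangle+\frac{c_k}{2(b_k+1)}\|u\|_H^2\Big\},$$ $$\lambda_{k+1}=\tilde\lambda_{k+1}-\frac{c_k}{b_k+1}Hu_{k+1},\qquad z_{k+1}=z_k+\frac{a_k}{c_k}(b_k+1)(\lambda_{k+1}-\tilde\lambda_{k+1})\;(=z_k-a_kHu_{k+1}),$$ where the minimizers are assumed to exist. Then for every $k\geqslant1$, $$L(x^*,\lambda^* )-L(x_k,\lambda_k)\leqslant\frac{\|\lambda_0-\lambda^*\|^2_{H^{-1}}}{2A_k},$$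 and for every $k\geqslant0$, $$\min_{0\leqslant j\leqslant k}\|u_{j+1}\|_H^2\leqslant\frac{\|\lambda_0-\lambda^*\|^2_{H^{-1}}}{\sum_{j=0}^ka_j^2}.$$
   Context: $\|u\|_M^2=u^{\mathrm T}Mu$ for a symmetric positive definite matrix $M$. $\varphi$ plays the role of a perturbation function of an objective $f(x)=\varphi(x,0)$. *)

theory Defs
  imports "HOL-Analysis.Analysis"
begin

definition epigraph_e :: "('a \<Rightarrow> ereal) \<Rightarrow> ('a \<times> real) set" where
  "epigraph_e f = {(p, y). f p \<le> ereal y}"

definition convex_fun_e :: "('a::real_vector \<Rightarrow> ereal) \<Rightarrow> bool" where
  "convex_fun_e f \<longleftrightarrow> convex (epigraph_e f)"

definition closed_fun_e :: "('a::topological_space \<Rightarrow> ereal) \<Rightarrow> bool" where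
  "closed_fun_e f \<longleftrightarrow> closed (epigraph_e f)"

definition proper_fun_e :: "('a \<Rightarrow> ereal) \<Rightarrow> bool" where
  "proper_fun_e f \<longleftrightarrow> (\<forall>p. f p \<noteq> -\<infinity>) \<and> (\<exists>p. f p \<noteq> \<infinity>)"

definition lagr :: "('x \<Rightarrow> real^'m \<Rightarrow> ereal) \<Rightarrow> 'x \<Rightarrow> real^'m \<Rightarrow> ereal" where
  "lagr \<phi> x l = (INF u. \<phi> x u - ereal (l \<bullet> u))"

definition wnorm2 :: "real^'m^'m \<Rightarrow> real^'m \<Rightarrow> real" where
  "wnorm2 M u = u \<bullet> (M *v u)"

definition sym_posdef :: "real^'m^'m \<Rightarrow> bool" where
  "sym_posdef M \<longleftrightarrow> transpose M = M \<and> (\<forall>u. u \<noteq> 0 \<longrightarrow> u \<bullet> (M *v u) > 0)"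

end

theory Submission
  imports Defs
begin

lemma symdot:
  fixes H :: "real^'m^'m"
  assumes "transpose H = H"
  shows "x \<bullet> (H *v y) = y \<bullet> (H *v x)"
proof -
  have "x \<bullet> (H *v y) = (x v* H) \<bullet> y" by (simp add: dot_lmul_matrix)
  also have "x v* H = H *v x" using vector_transpose_matrix[of x H] assms by simp
  finally show ?thesis by (simp add: inner_commute)
qed

lemma lim_ineq:
  fixes X Y C :: real
  assumes "\<And>t. 0 < t \<Longrightarrow> t \<le> 1 \<Longrightarrow> Y - t * C \<le> X"
  shows "Y \<le> X"
proof -
  have "(\<lambda>n. Y - (1 / real (Suc n)) * C) \<longlonglongrightarrow> Y - 0 * C"
    by (intro tendsto_intros LIMSEQ_Suc[OF lim_inverse_n'])
  then have l: "(\<lambda>n. Y - (1 / real (Suc n)) * C) \<longlonglongrightarrow> Y" by simp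
  have "\<forall>n. Y - (1 / real (Suc n)) * C \<le> X"
  proof
    fix n
    show "Y - (1 / real (Suc n)) * C \<le> X" by (rule assms) (auto simp: field_simps)
  qed
  then show ?thesis
    using LIMSEQ_le_const2[OF l, of X] by blast
qed

lemma alg: "(X'::real) \<le> X + (Y - Z) \<Longrightarrow> W \<le> Z \<Longrightarrow> E = X + D / 2 \<Longrightarrow> X' + (D - 2 * Y + W) / 2 + W / 2 \<le> E"
  by (simp add: field_simps)

lemma subgrad:
  fixes \<phi> :: "real^'n \<Rightarrow> real^'m \<Rightarrow> ereal" and H :: "real^'m^'m"
  assumes cvx: "convex_fun_e (\<lambda>(x, u). \<phi> x u)"
    and ninf: "\<And>x u. \<phi> x u \<noteq> -\<infinity>"
    and Hs: "transpose H = H"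
    and f0: "\<phi> x0 u0 = ereal f0"
    and mn: "\<And>x' u'. \<phi> x0 u0 - ereal (l \<bullet> u0) + ereal (r * wnorm2 H u0)
        \<le> \<phi> x' u' - ereal (l \<bullet> u') + ereal (r * wnorm2 H u')"
  shows "ereal (f0 + (l - (2 * r) *\<^sub>R (H *v u0)) \<bullet> (u' - u0)) \<le> \<phi> x' u'"
proof (cases "\<phi> x' u'")
  case PInf then show ?thesis by simp
next
  case MInf then show ?thesis using ninf by simp
next
  case (real f1)
  define d where "d = u' - u0"
  have key: "(l \<bullet> d - 2 * r * ((H *v u0) \<bullet> d)) - t * (r * (d \<bullet> (H *v d))) \<le> f1 - f0"
    if t: "0 < t" "t \<le> 1" for t
  proof -
    have e0: "((x0, u0), f0) \<in> epigraph_e (\<lambda>(x, u). \<phi> x u)"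
      using f0 by (simp add: epigraph_e_def)
    have e1: "((x', u'), f1) \<in> epigraph_e (\<lambda>(x, u). \<phi> x u)"
      using real by (simp add: epigraph_e_def)
    have "(1 - t) *\<^sub>R ((x0, u0), f0) + t *\<^sub>R ((x', u'), f1) \<in> epigraph_e (\<lambda>(x, u). \<phi> x u)"
      using convexD[OF cvx[unfolded convex_fun_e_def] e0 e1, of "1 - t" t] t by simp
    then have le: "\<phi> ((1 - t) *\<^sub>R x0 + t *\<^sub>R x') ((1 - t) *\<^sub>R u0 + t *\<^sub>R u') \<le> ereal ((1 - t) * f0 + t * f1)"
      by (simp add: epigraph_e_def)
    define ut where "ut = (1 - t) *\<^sub>R u0 + t *\<^sub>R u'"
    have ut: "ut = u0 + t *\<^sub>R d" unfolding ut_def d_def by (simp add: algebra_simps)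
    obtain y where y: "\<phi> ((1 - t) *\<^sub>R x0 + t *\<^sub>R x') ut = ereal y"
      using le ninf unfolding ut_def by (cases "\<phi> ((1 - t) *\<^sub>R x0 + t *\<^sub>R x') ((1 - t) *\<^sub>R u0 + t *\<^sub>R u')") auto
    have yle: "y \<le> (1 - t) * f0 + t * f1" using le y unfolding ut_def by simp
    have "f0 - l \<bullet> u0 + r * wnorm2 H u0 \<le> y - l \<bullet> ut + r * wnorm2 H ut"
      using mn[of "(1 - t) *\<^sub>R x0 + t *\<^sub>R x'" ut] f0 y by simp
    also have "wnorm2 H ut = wnorm2 H u0 + 2 * t * ((H *v u0) \<bullet> d) + t * t * (d \<bullet> (H *v d))"
      unfolding ut wnorm2_def using symdot[OF Hs, of u0 d]
      by (simp add: matrix_vector_right_distrib matrix_vector_mult_scaleR inner_add_left inner_add_right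
           algebra_simps inner_commute)
    also have "l \<bullet> ut = l \<bullet> u0 + t * (l \<bullet> d)" unfolding ut by (simp add: inner_add_right)
    finally have "0 \<le> t * ((f1 - f0) - (l \<bullet> d - 2 * r * ((H *v u0) \<bullet> d)) + t * (r * (d \<bullet> (H *v d))))"
      using yle by (simp add: algebra_simps)
    then show ?thesis using t by (simp add: zero_le_mult_iff)
  qed
  have "l \<bullet> d - 2 * r * ((H *v u0) \<bullet> d) \<le> f1 - f0"
    by (rule lim_ineq) (rule key)
  moreover have "(l - (2 * r) *\<^sub>R (H *v u0)) \<bullet> d = l \<bullet> d - 2 * r * ((H *v u0) \<bullet> d)"
    by (simp add: inner_diff_left)
  ultimately show ?thesis using real unfolding d_def by simp
qed

theorem theorem8:
  fixes \<phi> :: "real^'n \<Rightarrow> real^'m \<Rightarrow> ereal"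
    and xs :: "real^'n" and ls :: "real^'m"
    and H :: "real^'m^'m"
    and A a b c :: "nat \<Rightarrow> real"
    and lam lt z :: "nat \<Rightarrow> real^'m"
    and x :: "nat \<Rightarrow> real^'n" and u :: "nat \<Rightarrow> real^'m"
  assumes cvx: "convex_fun_e (\<lambda>(x, u). \<phi> x u)"
    and clsd: "closed_fun_e (\<lambda>(x, u). \<phi> x u)"
    and proper: "proper_fun_e (\<lambda>(x, u). \<phi> x u)"
    and saddle: "\<And>x' l'. lagr \<phi> xs l' \<le> lagr \<phi> xs ls \<and> lagr \<phi> xs ls \<le> lagr \<phi> x' ls"
    and H: "sym_posdef H"
    and a_pos: "\<And>k. a k > 0" and b_nn: "\<And>k. b k \<ge> 0" and c_pos: "\<And>k. c k > 0"
    and A_step: "\<And>k. A (Suc k) - A k = a k"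
    and A_ab: "\<And>k. A k = a k * b k"
    and A0: "A 0 = 0" and b0: "b 0 = 0"
    and c_ge: "\<And>k. c k \<ge> a k"
    and z0: "z 0 = lam 0"
    and lt_def: "\<And>k. lt (Suc k) = (1 / (b k + 1)) *\<^sub>R z k + (b k / (b k + 1)) *\<^sub>R lam k"
    and argmin: "\<And>k x' u'.
        \<phi> (x (Suc k)) (u (Suc k)) - ereal (lt (Suc k) \<bullet> u (Suc k))
          + ereal (c k / (2 * (b k + 1)) * wnorm2 H (u (Suc k)))
        \<le> \<phi> x' u' - ereal (lt (Suc k) \<bullet> u') + ereal (c k / (2 * (b k + 1)) * wnorm2 H u')"
    and lam_def: "\<And>k. lam (Suc k) = lt (Suc k) - (c k / (b k + 1)) *\<^sub>R (H *v u (Suc k))"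
    and z_def: "\<And>k. z (Suc k) = z k + (a k / c k * (b k + 1)) *\<^sub>R (lam (Suc k) - lt (Suc k))"
  shows "(\<forall>k\<ge>1. lagr \<phi> xs ls - lagr \<phi> (x k) (lam k)
            \<le> ereal (wnorm2 (matrix_inv H) (lam 0 - ls) / (2 * A k)))
       \<and> (\<forall>k. (MIN j\<in>{0..k}. wnorm2 H (u (Suc j)))
            \<le> wnorm2 (matrix_inv H) (lam 0 - ls) / (\<Sum>j=0..k. (a j)^2))"
proof -
  have Hs: "transpose H = H" and Hp: "\<And>v. v \<noteq> 0 \<Longrightarrow> v \<bullet> (H *v v) > 0"
    using H by (auto simp: sym_posdef_def)
  have Hnn: "v \<bullet> (H *v v) \<ge> 0" for v
    using Hp[of v] by (cases "v = 0") auto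
  have "\<exists>B. B ** H = mat 1"
    unfolding matrix_left_invertible_ker
  proof (intro allI impI)
    fix v assume "H *v v = 0"
    then show "v = 0" using Hp[of v] by (cases "v = 0") auto
  qed
  then have "invertible H" by (simp add: invertible_left_inverse)
  then have "H ** matrix_inv H = mat 1 \<and> matrix_inv H ** H = mat 1"
    unfolding invertible_def matrix_inv_def by (rule someI_ex)
  then have HM: "H ** matrix_inv H = mat 1" and MH: "matrix_inv H ** H = mat 1" by auto
  define M where "M = matrix_inv H"
  have MHv: "M *v (H *v v) = v" for v
    by (simp add: M_def matrix_vector_mul_assoc MH)
  have HMv: "H *v (M *v v) = v" for v
    by (simp add: M_def matrix_vector_mul_assoc HM)
  have Mnn: "wnorm2 M v \<ge> 0" for v
  proof -
    have "wnorm2 M v = (H *v (M *v v)) \<bullet> (M *v v)" by (simp add: wnorm2_def HMv inner_commute)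
    also have "\<dots> = (M *v v) \<bullet> (H *v (M *v v))" by (simp add: inner_commute)
    finally show ?thesis using Hnn by simp
  qed
  have ninf: "\<And>x u. \<phi> x u \<noteq> -\<infinity>" using proper by (auto simp: proper_fun_e_def)
  obtain p0 where p0: "\<phi> (fst p0) (snd p0) \<noteq> \<infinity>" using proper by (auto simp: proper_fun_e_def split: prod.splits)
  define \<Phi> where "\<Phi> k = real_of_ereal (\<phi> (x (Suc k)) (u (Suc k)))" for k
  have fin: "\<phi> (x (Suc k)) (u (Suc k)) = ereal (\<Phi> k)" for k
  proof -
    have "\<phi> (x (Suc k)) (u (Suc k)) \<noteq> \<infinity>"
    proof
      assume inf: "\<phi> (x (Suc k)) (u (Suc k)) = \<infinity>"
      have "\<phi> (fst p0) (snd p0) - ereal (lt (Suc k) \<bullet> snd p0) + ereal (c k / (2 * (b k + 1)) * wnorm2 H (snd p0)) \<noteq> \<infinity>"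
        using p0 by (cases "\<phi> (fst p0) (snd p0)") auto
      then show False using argmin[of k "fst p0" "snd p0"] inf by simp
    qed
    then show ?thesis using ninf[of "x (Suc k)" "u (Suc k)"] unfolding \<Phi>_def
      by (cases "\<phi> (x (Suc k)) (u (Suc k))") auto
  qed
  have lamk: "lam (Suc k) = lt (Suc k) - (2 * (c k / (2 * (b k + 1)))) *\<^sub>R (H *v u (Suc k))" for k
  proof -
    have e: "2 * (c k / (2 * (b k + 1))) = c k / (b k + 1)" using b_nn[of k] by (simp add: field_simps)
    show ?thesis unfolding e by (rule lam_def)
  qed
  have sub: "ereal (\<Phi> k + lam (Suc k) \<bullet> (u' - u (Suc k))) \<le> \<phi> x' u'" for k x' u'
    using subgrad[OF cvx ninf Hs fin[of k] argmin[of k], where x'=x' and u'=u'] lamk[of k] by simp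
  have lagr_le: "lagr \<phi> x' l \<le> \<phi> x' u' - ereal (l \<bullet> u')" for x' l u'
    unfolding lagr_def by (rule INF_lower) simp
  have lagr_ge: "ereal (\<Phi> k - lam (Suc k) \<bullet> u (Suc k)) \<le> lagr \<phi> x' (lam (Suc k))" for k x'
    unfolding lagr_def
  proof (rule INF_greatest)
    fix u' 
    have "ereal (\<Phi> k - lam (Suc k) \<bullet> u (Suc k)) = ereal (\<Phi> k + lam (Suc k) \<bullet> (u' - u (Suc k))) - ereal (lam (Suc k) \<bullet> u')"
      by (simp add: inner_diff_right)
    also have "\<dots> \<le> \<phi> x' u' - ereal (lam (Suc k) \<bullet> u')"
      using sub by (rule ereal_minus_mono) simp
    finally show "ereal (\<Phi> k - lam (Suc k) \<bullet> u (Suc k)) \<le> \<phi> x' u' - ereal (lam (Suc k) \<bullet> u')" .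
  qed
  define ell where "ell k = \<Phi> (k - 1) - lam k \<bullet> u k" for k
  have L1: "lagr \<phi> (x (Suc k)) (lam (Suc k)) = ereal (ell (Suc k))" for k
    using lagr_ge[of k "x (Suc k)"] lagr_le[of "x (Suc k)" "lam (Suc k)" "u (Suc k)"]
    unfolding ell_def by (simp add: fin)
  have "lagr \<phi> xs ls \<le> lagr \<phi> (x 1) ls" using saddle by blast
  also have "\<dots> \<le> \<phi> (x 1) (u 1) - ereal (ls \<bullet> u 1)" by (rule lagr_le)
  finally have Pup: "lagr \<phi> xs ls \<le> ereal (\<Phi> 0 - ls \<bullet> u 1)" using fin[of 0] by simp
  have Plo: "ereal (\<Phi> 0 - lam 1 \<bullet> u 1) \<le> lagr \<phi> xs ls"
    using lagr_ge[of 0 xs] saddle[where x'=xs and l'="lam 1"] by simp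
  obtain P where P: "lagr \<phi> xs ls = ereal P"
    using Pup Plo by (cases "lagr \<phi> xs ls") auto
  have L2: "ell (Suc k) \<le> P" for k
  proof -
    have "ereal (\<Phi> k - lam (Suc k) \<bullet> u (Suc k)) \<le> ereal P"
      using lagr_ge[of k xs] saddle[where x'=xs and l'="lam (Suc k)"] P by (metis order.trans)
    then show ?thesis unfolding ell_def by simp
  qed
  have L3: "P \<le> ell (Suc k) + (lam (Suc k) - ls) \<bullet> u (Suc k)" for k
  proof -
    have "ereal P \<le> lagr \<phi> (x (Suc k)) ls" using saddle P by metis
    also have "\<dots> \<le> \<phi> (x (Suc k)) (u (Suc k)) - ereal (ls \<bullet> u (Suc k))" by (rule lagr_le)
    finally show ?thesis unfolding ell_def by (simp add: fin inner_diff_left)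
  qed
  have L4: "ell (Suc k) \<le> ell (Suc (Suc k)) + (lam (Suc (Suc k)) - lam (Suc k)) \<bullet> u (Suc (Suc k))" for k
    using sub[where k=k and x'="x (Suc (Suc k))" and u'="u (Suc (Suc k))"] fin[of "Suc k"]
    unfolding ell_def by (simp add: inner_diff_left inner_diff_right)
  have A_nn: "A k \<ge> 0" for k using A_ab[of k] a_pos[of k] b_nn[of k] by simp
  define E where "E k = A k * (P - ell k) + wnorm2 M (z k - ls) / 2" for k
  have step: "E (Suc k) + (a k)^2 / 2 * wnorm2 H (u (Suc k)) \<le> E k" for k
  proof -
    define v where "v = u (Suc k)"
    define w where "w = z k - ls"
    have bp: "b k + 1 > 0" using b_nn[of k] by simp
    have cz: "c k \<noteq> 0" using c_pos[of k] by simp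
    have zs: "z (Suc k) - ls = w - a k *\<^sub>R (H *v v)"
      unfolding w_def v_def z_def lam_def using bp cz by simp
    have dist: "wnorm2 M (z (Suc k) - ls) = wnorm2 M w - 2 * a k * (w \<bullet> v) + (a k)^2 * (v \<bullet> (H *v v))"
    proof -
      have s1: "(H *v v) \<bullet> (M *v w) = v \<bullet> w"
        using symdot[OF Hs, of "M *v w" v] by (simp add: HMv inner_commute)
      show ?thesis unfolding zs wnorm2_def
        by (simp add: matrix_vector_mult_diff_distrib matrix_vector_mult_scaleR MHv inner_diff_left
            inner_diff_right s1 power2_eq_square algebra_simps inner_commute)
    qed
    have B1: "A k * (P - ell (Suc k)) \<le> A k * (P - ell k) + A k * ((lam (Suc k) - lam k) \<bullet> v)"
    proof (cases k)
      case 0 then show ?thesis using A0 by simp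
    next
      case (Suc j)
      have "A k * ell k \<le> A k * (ell (Suc k) + (lam (Suc k) - lam k) \<bullet> v)"
        using L4[of j] Suc A_nn[of k] unfolding v_def by (intro mult_left_mono) auto
      then show ?thesis by (simp add: algebra_simps)
    qed
    have B2: "a k * (P - ell (Suc k)) \<le> a k * ((lam (Suc k) - ls) \<bullet> v)"
      using L3[of k] a_pos[of k] unfolding v_def by (intro mult_left_mono) auto
    have lamexp: "(b k + 1) * (lam (Suc k) \<bullet> v) = z k \<bullet> v + b k * (lam k \<bullet> v) - c k * (v \<bullet> (H *v v))"
    proof -
      have "lam (Suc k) \<bullet> v = (1 / (b k + 1)) * (z k \<bullet> v) + (b k / (b k + 1)) * (lam k \<bullet> v)
          - (c k / (b k + 1)) * ((H *v v) \<bullet> v)"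
        unfolding lam_def lt_def v_def by (simp add: inner_diff_left inner_add_left)
      also have "\<dots> = (z k \<bullet> v + b k * (lam k \<bullet> v) - c k * (v \<bullet> (H *v v))) / (b k + 1)"
        using inner_commute[of "H *v v" v] by (simp add: add_divide_distrib diff_divide_distrib)
      finally show ?thesis using bp by simp
    qed
    have eta: "v \<bullet> (H *v v) \<ge> 0" by (rule Hnn)
    have neg: "a k * (a k - c k) * (v \<bullet> (H *v v)) \<le> 0"
      using a_pos[of k] c_ge[of k] eta by (simp add: mult_nonneg_nonpos mult_nonpos_nonneg)
    have As: "A (Suc k) = a k * (b k + 1)" using A_step[of k] A_ab[of k] by (simp add: algebra_simps)
    have wv: "w \<bullet> v = z k \<bullet> v - ls \<bullet> v" unfolding w_def by (simp add: inner_diff_left)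
    have "A (Suc k) * (P - ell (Suc k)) \<le> A k * (P - ell k) + (A k * ((lam (Suc k) - lam k) \<bullet> v) + a k * ((lam (Suc k) - ls) \<bullet> v))"
      using B1 B2 A_step[of k] by (simp add: algebra_simps)
    also have "A k * ((lam (Suc k) - lam k) \<bullet> v) + a k * ((lam (Suc k) - ls) \<bullet> v)
        = a k * ((b k + 1) * (lam (Suc k) \<bullet> v)) - a k * (b k * (lam k \<bullet> v)) - a k * (ls \<bullet> v)"
      using A_ab[of k] by (simp add: inner_diff_left algebra_simps)
    also have "\<dots> = a k * (w \<bullet> v) - a k * c k * (v \<bullet> (H *v v))"
      unfolding lamexp wv by (simp add: algebra_simps)
    finally have "A (Suc k) * (P - ell (Suc k)) \<le> A k * (P - ell k) + (a k * (w \<bullet> v) - a k * c k * (v \<bullet> (H *v v)))"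
      by simp
    then have F: "A (Suc k) * (P - ell (Suc k)) \<le> A k * (P - ell k) + (a k * (w \<bullet> v) - a k * c k * (v \<bullet> (H *v v)))" .
    have neg2: "a k * a k * (v \<bullet> (H *v v)) \<le> a k * c k * (v \<bullet> (H *v v))"
      using neg by (simp add: algebra_simps)
    have G: "E (Suc k) + (a k)^2 / 2 * wnorm2 H (u (Suc k)) =
        A (Suc k) * (P - ell (Suc k)) + (wnorm2 M w - 2 * (a k * (w \<bullet> v)) + a k * a k * (v \<bullet> (H *v v))) / 2
        + (a k * a k * (v \<bullet> (H *v v))) / 2"
      unfolding E_def dist v_def[symmetric] w_def[symmetric] by (simp add: wnorm2_def[of H v] power2_eq_square)
    have "E k = A k * (P - ell k) + wnorm2 M w / 2" unfolding E_def w_def by simp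
    then show ?thesis unfolding G by (rule alg[OF F neg2])
  qed
  have tele: "E k + (\<Sum>j<k. (a j)^2 / 2 * wnorm2 H (u (Suc j))) \<le> E 0" for k
  proof (induction k)
    case 0 then show ?case by simp
  next
    case (Suc k) then show ?case using step[of k] by simp
  qed
  define D where "D = wnorm2 M (lam 0 - ls)"
  have E0: "E 0 = D / 2" unfolding E_def D_def using A0 z0 by simp
  have Enn: "E k \<ge> A k * (P - ell k)" for k unfolding E_def using Mnn[of "z k - ls"] by simp
  have Enn2: "E k \<ge> 0" for k
  proof (cases k)
    case 0 then show ?thesis using E0 Mnn[of "lam 0 - ls"] unfolding D_def by simp
  next
    case (Suc j)
    then show ?thesis using Enn[of k] L2[of j] A_nn[of k] by (meson mult_nonneg_nonneg diff_ge_0_iff_ge order_trans)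
  qed
  have Hsum: "(\<Sum>j<k. (a j)^2 / 2 * wnorm2 H (u (Suc j))) \<ge> 0" for k
    by (intro sum_nonneg) (simp add: wnorm2_def Hnn)
  have part1: "lagr \<phi> xs ls - lagr \<phi> (x k) (lam k) \<le> ereal (wnorm2 (matrix_inv H) (lam 0 - ls) / (2 * A k))"
    if k: "k \<ge> 1" for k
  proof -
    obtain j where j: "k = Suc j" using k by (cases k) auto
    have Apos: "A k > 0" using A_step[of j] A_nn[of j] a_pos[of j] j by simp
    have "A k * (P - ell k) \<le> D / 2" using Enn[of k] tele[of k] Hsum[of k] E0 by simp
    then have "P - ell k \<le> D / (2 * A k)" using Apos by (simp add: field_simps)
    then show ?thesis using P L1[of j] j unfolding D_def M_def by simp
  qed
  have part2: "(MIN j\<in>{0..k}. wnorm2 H (u (Suc j)))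
            \<le> wnorm2 (matrix_inv H) (lam 0 - ls) / (\<Sum>j=0..k. (a j)^2)" for k
  proof -
    define m where "m = (MIN j\<in>{0..k}. wnorm2 H (u (Suc j)))"
    have mle: "m \<le> wnorm2 H (u (Suc j))" if "j \<in> {0..k}" for j
      unfolding m_def using that by (intro Min_le) auto
    have S: "{0..k} = {..<Suc k}" by auto
    have "(\<Sum>j<Suc k. (a j)^2 / 2 * wnorm2 H (u (Suc j))) \<le> D / 2"
      using tele[of "Suc k"] Enn2[of "Suc k"] E0 by simp
    then have s2: "(\<Sum>j=0..k. (a j)^2 * wnorm2 H (u (Suc j))) \<le> D"
      unfolding S by (simp add: sum_divide_distrib[symmetric])
    have "m * (\<Sum>j=0..k. (a j)^2) = (\<Sum>j=0..k. (a j)^2 * m)" by (simp add: sum_distrib_left mult.commute)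
    also have "\<dots> \<le> (\<Sum>j=0..k. (a j)^2 * wnorm2 H (u (Suc j)))"
      by (intro sum_mono mult_left_mono mle) auto
    finally have "m * (\<Sum>j=0..k. (a j)^2) \<le> D" using s2 by simp
    moreover have "(\<Sum>j=0..k. (a j)^2) > 0"
      using a_pos by (intro sum_pos) (auto, metis less_irrefl)
    ultimately show ?thesis unfolding m_def[symmetric] D_def M_def by (simp add: field_simps)
  qed
  show ?thesis using part1 part2 by blast
qed

end
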